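(* For every integer $n\ge 0$, $$\Phi^{(2)}[aq^n; b, b'; c, c'; x, y] = \sum_{k=0}^n \sum_{i=0}^k \begin{bmatrix} n \\ k \end{bmatrix} \begin{bmatrix} k \\ i \end{bmatrix} \frac{(b; q)_{k-i} (b'; q)_i}{(c; q)_{k-i} (c'; q)_i} q^{2\binom{k}{2}} a^k x^{k-i} y^i\, \Phi^{(2)}[aq^k; bq^{k-i}, b'q^i; cq^{k-i}, c'q^i; xq^i, y]$$ and $$\Phi^{(2)}[aq^{-n}; b, b'; c, c'; x, y] = \sum_{k=0}^n \sum_{i=0}^k \begin{bmatrix} n \\ k \end{bmatrix} \begin{bmatrix} k \\ i \end{bmatrix} \frac{(b; q)_{k-i} (b'; q)_i}{(c; q)_{k-i} (c'; q)_i} q^{\binom{k}{2} - nk} (-a)^k x^{k-i} y^i\, \Phi^{(2)}[a; bq^{k-i}, b'q^i; cq^{k-i}, c'q^i; xq^i, y].$$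
   Context: Let $q$ be a complex number with $0<|q|<1$. For complex $z$ and integer $m\ge 0$, $(z;q)_m=\prod_{j=0}^{m-1}(1-zq^j)$, with $(z;q)_0=1$. For integers $0\le k\le n$, $\begin{bmatrix} n \\ k \end{bmatrix}=\frac{(q;q)_n}{(q;q)_k(q;q)_{n-k}}$ is the $q$-binomial coefficient. The $q$-Appell function $\Phi^{(2)}$ is $$\Phi^{(2)}[a; b, b'; c, c'; x, y] = \sum_{m, n \geq 0} \frac{(a; q)_{m+n} (b; q)_m (b'; q)_n}{(q; q)_m (q; q)_n (c; q)_m (c'; q)_n} x^m y^n.$$ Identities are understood as identities of power series in $x,y$ (formal, or convergent for small $|x|,|y|$), with complex parameters chosen so that no denominator occurring vanishes. *)

theory Defs
  imports "HOL-Analysis.Analysis"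
begin

definition qpoch :: "complex \<Rightarrow> complex \<Rightarrow> nat \<Rightarrow> complex" where
  "qpoch z q m = (\<Prod>j<m. 1 - z * q ^ j)"

definition qbinom :: "complex \<Rightarrow> nat \<Rightarrow> nat \<Rightarrow> complex" where
  "qbinom q n k = qpoch q q n / (qpoch q q k * qpoch q q (n - k))"

definition Phi2 :: "complex \<Rightarrow> complex \<Rightarrow> complex \<Rightarrow> complex \<Rightarrow> complex \<Rightarrow> complex
                     \<Rightarrow> complex \<Rightarrow> complex \<Rightarrow> complex" where
  "Phi2 q a b b' c c' x y =
     (\<Sum>\<^sub>\<infinity>(m, n)\<in>UNIV.
        qpoch a q (m + n) * qpoch b q m * qpoch b' q n
        / (qpoch q q m * qpoch q q n * qpoch c q m * qpoch c' q n) * x ^ m * y ^ n)"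

end

theory Submission
  imports Defs "HOL-Analysis.Analysis"
begin


fun qb :: "complex \<Rightarrow> nat \<Rightarrow> nat \<Rightarrow> complex" where
  "qb q 0 k = (if k = 0 then 1 else 0)"
| "qb q (Suc n) 0 = 1"
| "qb q (Suc n) (Suc k) = q ^ Suc k * qb q n (Suc k) + qb q n k"

definition ff :: "complex \<Rightarrow> nat \<Rightarrow> nat \<Rightarrow> complex" where
  "ff q M j = (\<Prod>t<j. 1 - q ^ (M - t))"

lemma qpoch_0[simp]: "qpoch z q 0 = 1" by (simp add: qpoch_def)

lemma qpoch_Suc: "qpoch z q (Suc m) = qpoch z q m * (1 - z * q ^ m)"
  by (simp add: qpoch_def)

lemma qpoch_Suc': "qpoch z q (Suc m) = (1 - z) * qpoch (z * q) q m"
  unfolding qpoch_def by (subst prod.lessThan_Suc_shift) (simp add: mult.assoc)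

lemma qpoch_add: "qpoch z q (j + m) = qpoch z q j * qpoch (z * q ^ j) q m"
  by (induction m) (simp_all add: qpoch_Suc power_add mult_ac)

lemma qpochq_nz: assumes "norm q < 1" shows "qpoch q q m \<noteq> 0"
proof -
  have "1 - q * q ^ j \<noteq> 0" for j
  proof
    assume "1 - q * q ^ j = 0"
    then have "norm (q ^ Suc j) = 1" by (simp add: algebra_simps)
    moreover have "norm (q ^ Suc j) < 1"
    proof -
      have "norm q ^ j \<le> 1" using assms by (simp add: power_le_one)
      then have "norm q * norm q ^ j \<le> norm q" by (simp add: mult_left_le)
      then show ?thesis using assms by (simp add: norm_mult norm_power)
    qed
    ultimately show False by simp
  qed
  then show ?thesis by (simp add: qpoch_def)
qed

lemma qb_zero: "n < k \<Longrightarrow> qb q n k = 0"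
proof (induction n arbitrary: k)
  case 0 then show ?case by simp
next
  case (Suc n) then show ?case by (cases k) auto
qed

lemma qb_n0[simp]: "qb q n 0 = 1" by (cases n) auto
lemma qb_nn[simp]: "qb q n n = 1" by (induction n) (auto simp: qb_zero)

lemma qb_closed: "k \<le> n \<Longrightarrow> qb q n k * (qpoch q q k * qpoch q q (n - k)) = qpoch q q n"
proof (induction n arbitrary: k)
  case 0 then show ?case by simp
next
  case (Suc n)
  show ?case
  proof (cases k)
    case 0 then show ?thesis by simp
  next
    case (Suc i)
    show ?thesis
    proof (cases "i = n")
      case True
      then show ?thesis using Suc `k \<le> Suc n` Suc.IH[of n]
        by (simp add: qb_zero qpoch_Suc)
    next
      case False
      then have "i < n" using Suc `k \<le> Suc n` by simp
      then obtain d where d: "n = i + Suc d" by (metis add_Suc_right less_imp_Suc_add)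
      have I1: "qb q n (Suc i) * (qpoch q q (Suc i) * qpoch q q d) = qpoch q q n"
        using Suc.IH[of "Suc i"] d by simp
      have I2: "qb q n i * (qpoch q q i * qpoch q q (Suc d)) = qpoch q q n"
        using Suc.IH[of i] d by simp
      have "qb q (Suc n) k * (qpoch q q k * qpoch q q (Suc n - k))
          = (q ^ Suc i * qb q n (Suc i) + qb q n i) * (qpoch q q (Suc i) * qpoch q q (Suc d))"
        using Suc d by simp
      also have "\<dots> = q ^ Suc i * (qb q n (Suc i) * (qpoch q q (Suc i) * qpoch q q d)) * (1 - q * q ^ d)
            + (qb q n i * (qpoch q q i * qpoch q q (Suc d))) * (1 - q * q ^ i)"
        by (simp add: qpoch_Suc algebra_simps)
      also have "\<dots> = qpoch q q n * (q ^ Suc i * (1 - q * q ^ d) + (1 - q * q ^ i))"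
        unfolding I1 I2 by (simp add: algebra_simps)
      also have "\<dots> = qpoch q q n * (1 - q * q ^ n)"
        using d by (simp add: algebra_simps power_add)
      finally show ?thesis by (simp add: qpoch_Suc)
    qed
  qed
qed

lemma qb_eq: assumes "norm q < 1" "k \<le> n" shows "qbinom q n k = qb q n k"
  using qb_closed[OF assms(2), of q] qpochq_nz[OF assms(1)]
  unfolding qbinom_def by (simp add: field_simps)

lemma qb_sum_split:
  "(\<Sum>k\<le>Suc n. qb q (Suc n) k * Y k) = (\<Sum>k\<le>n. q ^ k * qb q n k * Y k) + (\<Sum>k\<le>n. qb q n k * Y (Suc k))"
proof -
  have "(\<Sum>k\<le>n. q ^ k * qb q n k * Y k) = (\<Sum>k\<le>Suc n. q ^ k * qb q n k * Y k)"
    by (simp add: qb_zero)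
  also have "\<dots> = Y 0 + (\<Sum>k\<le>n. q ^ Suc k * qb q n (Suc k) * Y (Suc k))"
    by (subst sum.atMost_Suc_shift) simp
  finally have 1: "(\<Sum>k\<le>n. q ^ k * qb q n k * Y k) = Y 0 + (\<Sum>k\<le>n. q ^ Suc k * qb q n (Suc k) * Y (Suc k))" .
  have "(\<Sum>k\<le>Suc n. qb q (Suc n) k * Y k) = Y 0 + (\<Sum>k\<le>n. qb q (Suc n) (Suc k) * Y (Suc k))"
    by (subst sum.atMost_Suc_shift) simp
  also have "\<dots> = Y 0 + (\<Sum>k\<le>n. q ^ Suc k * qb q n (Suc k) * Y (Suc k)) + (\<Sum>k\<le>n. qb q n k * Y (Suc k))"
    by (simp add: algebra_simps sum.distrib)
  finally show ?thesis using 1 by simp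
qed

lemma ff_0[simp]: "ff q M 0 = 1" by (simp add: ff_def)
lemma ff_Suc: "ff q M (Suc j) = ff q M j * (1 - q ^ (M - j))" by (simp add: ff_def)
lemma ff_zero: "M < j \<Longrightarrow> ff q M j = 0"
  unfolding ff_def by (rule prod_zero) (auto intro: bexI[of _ M])
lemma ff_poch: "j \<le> M \<Longrightarrow> ff q M j * qpoch q q (M - j) = qpoch q q M"
proof (induction j)
  case 0 then show ?case by simp
next
  case (Suc j)
  then obtain d where d: "M - j = Suc d" by (metis Suc_diff_Suc Suc_le_lessD)
  have "M - Suc j = d" using d by simp
  then show ?case using Suc d by (simp add: ff_Suc qpoch_Suc mult_ac)
qed

lemma negpow: "(- (a * q)) ^ k = (- a) ^ k * q ^ k" for a q :: complex
  by (metis minus_mult_left power_mult_distrib)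
lemma t1: "qb * q ^ C * (- (a * q)) ^ k * G = q ^ k * qb * (q ^ C * (- a) ^ k * G)" for q a qb G :: complex
  unfolding negpow by algebra
lemma t2: "- a * (qb * q ^ C * (- (a * q)) ^ k * G) = qb * (q ^ (C + k) * (- a) ^ Suc k * G)" for q a qb G :: complex
  unfolding negpow power_add power_Suc by algebra
lemma t3: "qb * q ^ (2 * C + j * k) * (a * q) ^ k * (D1 + a * q ^ (j + k) * D2) =
   q ^ k * qb * (q ^ (2 * C + j * k) * a ^ k * D1) + qb * (q ^ (2 * (C + k) + j * Suc k) * a ^ Suc k * D2)" for q a qb D1 D2 :: complex
proof -
  have e: "q ^ (2 * (C + k) + j * Suc k) = q ^ (2 * C + j * k) * q ^ k * q ^ (j + k)"
    by (simp add: power_add[symmetric] algebra_simps)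
  show ?thesis unfolding e power_mult_distrib power_Suc by algebra
qed

definition Gf :: "complex \<Rightarrow> nat \<Rightarrow> nat \<Rightarrow> complex \<Rightarrow> complex" where
  "Gf q L j a = ff q L j * qpoch a q (L - j)"

lemma G_rec: "Gf q L j a = Gf q L j (a * q) - a * Gf q L (Suc j) (a * q)"
proof (cases "j < L")
  case True
  then obtain m where m: "L - j = Suc m" by (metis Suc_diff_Suc)
  have m2: "L - Suc j = m" using m by simp
  have p1: "qpoch a q (Suc m) = (1 - a) * qpoch (a * q) q m" by (rule qpoch_Suc')
  have p2: "qpoch (a * q) q (Suc m) = qpoch (a * q) q m * (1 - a * q * q ^ m)" by (rule qpoch_Suc)
  show ?thesis unfolding Gf_def m m2 ff_Suc p1 p2
    by (simp add: algebra_simps)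
next
  case False
  then show ?thesis by (simp add: Gf_def ff_Suc)
qed

lemma choose2_0[simp]: "((0::nat) choose 2) = 0" by (simp add: numeral_2_eq_2)

lemma choose2_Suc: "(Suc k choose 2) = (k choose 2) + k"
  by (simp add: numeral_2_eq_2)

lemma G_iter: "Gf q L j a = (\<Sum>k\<le>n. qb q n k * q ^ (k choose 2) * (- a) ^ k * Gf q L (j + k) (a * q ^ n))"
proof (induction n arbitrary: j a)
  case 0 then show ?case by simp
next
  case (Suc n)
  have "Gf q L j a = Gf q L j (a * q) - a * Gf q L (Suc j) (a * q)" by (rule G_rec)
  also have "\<dots> = (\<Sum>k\<le>n. qb q n k * q ^ (k choose 2) * (- (a * q)) ^ k * Gf q L (j + k) (a * q * q ^ n))
     - a * (\<Sum>k\<le>n. qb q n k * q ^ (k choose 2) * (- (a * q)) ^ k * Gf q L (Suc j + k) (a * q * q ^ n))"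
    using Suc.IH[of j "a * q"] Suc.IH[of "Suc j" "a * q"] by simp
  also have "\<dots> = (\<Sum>k\<le>n. q ^ k * qb q n k * (q ^ (k choose 2) * (- a) ^ k * Gf q L (j + k) (a * q ^ Suc n)))
     + (\<Sum>k\<le>n. qb q n k * (q ^ (Suc k choose 2) * (- a) ^ Suc k * Gf q L (j + Suc k) (a * q ^ Suc n)))"
    unfolding sum_distrib_left sum_subtractf[symmetric] sum.distrib[symmetric]
  proof (rule sum.cong[OF refl])
    fix k
    have e: "a * q * q ^ n = a * q ^ Suc n" "Suc j + k = j + Suc k" by simp_all
    show "qb q n k * q ^ (k choose 2) * (- (a * q)) ^ k * Gf q L (j + k) (a * q * q ^ n) -
          a * (qb q n k * q ^ (k choose 2) * (- (a * q)) ^ k * Gf q L (Suc j + k) (a * q * q ^ n)) =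
          q ^ k * qb q n k * (q ^ (k choose 2) * (- a) ^ k * Gf q L (j + k) (a * q ^ Suc n)) +
          qb q n k * (q ^ (Suc k choose 2) * (- a) ^ Suc k * Gf q L (j + Suc k) (a * q ^ Suc n))"
      unfolding e choose2_Suc t1 t2[symmetric] by simp
  qed
  also have "\<dots> = (\<Sum>k\<le>Suc n. qb q (Suc n) k * (q ^ (k choose 2) * (- a) ^ k * Gf q L (j + k) (a * q ^ Suc n)))"
    by (rule qb_sum_split[symmetric])
  finally show ?case by (simp add: mult_ac)
qed

definition Df :: "complex \<Rightarrow> nat \<Rightarrow> nat \<Rightarrow> complex \<Rightarrow> complex" where
  "Df q L j a = Gf q L j (a * q ^ j)"

lemma D_rec: "Df q L j (a * q) = Df q L j a + a * q ^ j * Df q L (Suc j) a"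
  using G_rec[of q L j "a * q ^ j"] unfolding Df_def by (simp add: mult_ac)

lemma D_iter: "Df q L j (a * q ^ n) = (\<Sum>k\<le>n. qb q n k * q ^ (2 * (k choose 2) + j * k) * a ^ k * Df q L (j + k) a)"
proof (induction n arbitrary: j a)
  case 0 then show ?case by simp
next
  case (Suc n)
  have "Df q L j (a * q ^ Suc n) = Df q L j ((a * q) * q ^ n)" by (simp add: mult_ac)
  also have "\<dots> = (\<Sum>k\<le>n. qb q n k * q ^ (2 * (k choose 2) + j * k) * (a * q) ^ k * Df q L (j + k) (a * q))"
    by (rule Suc.IH)
  also have "\<dots> = (\<Sum>k\<le>n. qb q n k * q ^ (2 * (k choose 2) + j * k) * (a * q) ^ k * (Df q L (j + k) a + a * q ^ (j + k) * Df q L (Suc (j + k)) a))"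
    by (simp add: D_rec)
  also have "\<dots> = (\<Sum>k\<le>n. q ^ k * qb q n k * (q ^ (2 * (k choose 2) + j * k) * a ^ k * Df q L (j + k) a))
     + (\<Sum>k\<le>n. qb q n k * (q ^ (2 * (Suc k choose 2) + j * Suc k) * a ^ Suc k * Df q L (j + Suc k) a))"
    unfolding sum.distrib[symmetric]
    by (rule sum.cong) (simp_all only: choose2_Suc t3 add_Suc_right)
  also have "\<dots> = (\<Sum>k\<le>Suc n. qb q (Suc n) k * (q ^ (2 * (k choose 2) + j * k) * a ^ k * Df q L (j + k) a))"
    by (rule qb_sum_split[symmetric])
  finally show ?case by (simp add: mult_ac)
qed

definition Wv :: "complex \<Rightarrow> nat \<Rightarrow> nat \<Rightarrow> nat \<Rightarrow> nat \<Rightarrow> complex" where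
  "Wv q M N j i = q ^ (i * (M - j)) * ff q M j * ff q N i"

lemma Wv_split: "Wv q M N j i * (1 - q ^ ((M + N) - (j + i))) = q ^ i * Wv q M N (Suc j) i + Wv q M N j (Suc i)"
proof (cases "j \<le> M \<and> i \<le> N")
  case True
  then obtain m n' where mn: "M = j + m" "N = i + n'" by (metis le_add_diff_inverse)
  show ?thesis
  proof (cases m)
    case 0
    then show ?thesis using mn by (simp add: Wv_def ff_Suc algebra_simps)
  next
    case (Suc m')
    have e: "M + N - (j + i) = Suc m' + n'" "M - j = Suc m'" "M - Suc j = m'" "N - i = n'" using mn Suc by auto
    show ?thesis unfolding Wv_def ff_Suc e
      by (simp add: power_add power_mult_distrib algebra_simps)
  qed
next
  case False
  then show ?thesis by (auto simp: Wv_def ff_Suc ff_zero)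
qed

lemma vandermonde: "ff q (M + N) k = (\<Sum>i\<le>k. qb q k i * Wv q M N (k - i) i)"
proof (induction k)
  case 0 then show ?case by (simp add: Wv_def)
next
  case (Suc k)
  have "ff q (M + N) (Suc k) = (\<Sum>i\<le>k. qb q k i * (Wv q M N (k - i) i * (1 - q ^ ((M + N) - k))))"
    by (simp add: ff_Suc Suc.IH sum_distrib_left mult_ac)
  also have "\<dots> = (\<Sum>i\<le>k. qb q k i * (Wv q M N (k - i) i * (1 - q ^ ((M + N) - ((k - i) + i)))))"
    by (rule sum.cong) auto
  also have "\<dots> = (\<Sum>i\<le>k. qb q k i * (q ^ i * Wv q M N (Suc (k - i)) i + Wv q M N (k - i) (Suc i)))"
    by (simp only: Wv_split)
  also have "\<dots> = (\<Sum>i\<le>k. q ^ i * qb q k i * Wv q M N (Suc k - i) i) + (\<Sum>i\<le>k. qb q k i * Wv q M N (Suc k - Suc i) (Suc i))"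
    by (simp add: sum.distrib[symmetric] algebra_simps Suc_diff_le)
  also have "\<dots> = (\<Sum>i\<le>Suc k. qb q (Suc k) i * Wv q M N (Suc k - i) i)"
    by (rule qb_sum_split[symmetric])
  finally show ?case .
qed



lemma W_final: "(\<Sum>k\<le>n. qb q n k * (q ^ (2 * (k choose 2)) * a ^ k) * (ff q L k * qpoch (a * q ^ k) q (L - k))) = qpoch (a * q ^ n) q L"
  using D_iter[of q L 0 a n] by (simp add: Df_def Gf_def mult_ac)

lemma G_final: assumes "q \<noteq> 0"
  shows "(\<Sum>k\<le>n. qb q n k * (q powi (int (k choose 2) - int n * int k) * (- a) ^ k) * (ff q L k * qpoch a q (L - k))) = qpoch (a / q ^ n) q L"
proof -
  have e: "q ^ (k choose 2) * (- (a / q ^ n)) ^ k = q powi (int (k choose 2) - int n * int k) * (- a) ^ k" for k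
  proof -
    have A: "q powi (int (k choose 2) - int n * int k) = q ^ (k choose 2) / q ^ (n * k)"
    proof -
      have "int n * int k = int (n * k)" by simp
      then have "q powi (int (k choose 2) - int n * int k) = q powi (int (k choose 2) - int (n * k))" by simp
      also have "\<dots> = q powi (int (k choose 2)) / q powi (int (n * k))"
        by (rule power_int_diff) (simp add: assms)
      finally show ?thesis by (simp only: power_int_of_nat)
    qed
    have B: "(- (a / q ^ n)) ^ k = (- a) ^ k / q ^ (n * k)"
      unfolding minus_divide_left power_divide power_mult ..
    show ?thesis unfolding A B by (simp only: divide_inverse mult_ac)
  qed
  have "qpoch (a / q ^ n) q L = Gf q L 0 (a / q ^ n)" by (simp add: Gf_def)
  also have "\<dots> = (\<Sum>k\<le>n. qb q n k * q ^ (k choose 2) * (- (a / q ^ n)) ^ k * Gf q L k (a / q ^ n * q ^ n))"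
    using G_iter[of q L 0 "a / q ^ n" n] by (simp only: add_0)
  also have "\<dots> = (\<Sum>k\<le>n. qb q n k * (q powi (int (k choose 2) - int n * int k) * (- a) ^ k) * (ff q L k * qpoch a q (L - k)))"
  proof (rule sum.cong[OF refl])
    fix k
    have aa: "a / q ^ n * q ^ n = a" using assms by simp
    show "qb q n k * q ^ (k choose 2) * (- (a / q ^ n)) ^ k * Gf q L k (a / q ^ n * q ^ n) =
      qb q n k * (q powi (int (k choose 2) - int n * int k) * (- a) ^ k) * (ff q L k * qpoch a q (L - k))"
      unfolding aa Gf_def e[symmetric] by (simp only: mult.assoc)
  qed
  finally show ?thesis by (rule sym)
qed

definition phiT :: "complex \<Rightarrow> complex \<Rightarrow> complex \<Rightarrow> complex \<Rightarrow> complex \<Rightarrow> complex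
                     \<Rightarrow> complex \<Rightarrow> complex \<Rightarrow> nat \<times> nat \<Rightarrow> complex" where
  "phiT q a b b' c c' x y = (\<lambda>(m, n).
        qpoch a q (m + n) * qpoch b q m * qpoch b' q n
        / (qpoch q q m * qpoch q q n * qpoch c q m * qpoch c' q n) * x ^ m * y ^ n)"

lemma Phi2_phiT: "Phi2 q a b b' c c' x y = infsum (phiT q a b b' c c' x y) UNIV"
  by (simp add: Phi2_def phiT_def)

definition Bx :: "complex \<Rightarrow> complex \<Rightarrow> complex \<Rightarrow> complex \<Rightarrow> complex
                     \<Rightarrow> complex \<Rightarrow> complex \<Rightarrow> nat \<Rightarrow> nat \<Rightarrow> complex" where
  "Bx q b b' c c' x y M N = qpoch b q M * qpoch b' q N
        / (qpoch q q M * qpoch q q N * qpoch c q M * qpoch c' q N) * x ^ M * y ^ N"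

lemma phiT_Bx: "phiT q a b b' c c' x y (M, N) = Bx q b b' c c' x y M N * qpoch a q (M + N)"
  by (simp add: phiT_def Bx_def)

lemma alg: fixes Q1 Q2 Pbj Pbi Pcj Pci g1 g2 X1 Y1 Pa Pbm Pbn Pqm Pqn Pcm Pcn X2 Qm Y2 FM FN :: complex
  assumes "FM \<noteq> 0" "FN \<noteq> 0"
  shows "Q1 * Q2 * (Pbj * Pbi) / (Pcj * Pci) * g1 * g2 * X1 * Y1 * (Pa * Pbm * Pbn / (Pqm * Pqn * Pcm * Pcn) * (X2 * Qm) * Y2)
    = (Pbj * Pbm) * (Pbi * Pbn) / ((FM * Pqm) * (FN * Pqn) * (Pcj * Pcm) * (Pci * Pcn)) * (X1 * X2) * (Y1 * Y2)
       * (Q1 * Q2 * g1 * g2 * (Qm * FM * FN) * Pa)"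
proof -
  have "(Pbj * Pbm) * (Pbi * Pbn) / ((FM * Pqm) * (FN * Pqn) * (Pcj * Pcm) * (Pci * Pcn)) * (X1 * X2) * (Y1 * Y2)
       * (Q1 * Q2 * g1 * g2 * (Qm * FM * FN) * Pa) = (Q1 * Q2 * (Pbj * Pbi) / (Pcj * Pci) * g1 * g2 * X1 * Y1 * (Pa * Pbm * Pbn / (Pqm * Pqn * Pcm * Pcn) * (X2 * Qm) * Y2)) * ((FM * inverse FM) * (FN * inverse FN))"
    by (simp only: divide_inverse inverse_mult_distrib mult_ac)
  also have "\<dots> = Q1 * Q2 * (Pbj * Pbi) / (Pcj * Pci) * g1 * g2 * X1 * Y1 * (Pa * Pbm * Pbn / (Pqm * Pqn * Pcm * Pcn) * (X2 * Qm) * Y2)"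
    using assms by simp
  finally show ?thesis ..
qed

lemma qpoch_shift_nz: assumes "\<And>m. qpoch c q m \<noteq> 0" shows "qpoch (c * q ^ j) q m \<noteq> 0"
  using assms[of "j + m"] by (simp add: qpoch_add)

lemma TL0:
  assumes nq: "norm q < 1" and hc: "\<And>m. qpoch c q m \<noteq> 0" and hc': "\<And>m. qpoch c' q m \<noteq> 0"
  shows "Q1 * Q2 * (qpoch b q j * qpoch b' q i) / (qpoch c q j * qpoch c' q i)
      * g1 * g2 * x ^ j * y ^ i
      * phiT q \<alpha> (b * q ^ j) (b' * q ^ i) (c * q ^ j) (c' * q ^ i) (x * q ^ i) y (m, n')
    = Bx q b b' c c' x y (j + m) (i + n') * (Q1 * Q2 * g1 * g2 * Wv q (j + m) (i + n') j i * qpoch \<alpha> q (m + n'))"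
proof -
  have FM: "qpoch q q (j + m) = ff q (j + m) j * qpoch q q m" using ff_poch[of j "j + m" q] by simp
  have FN: "qpoch q q (i + n') = ff q (i + n') i * qpoch q q n'" using ff_poch[of i "i + n'" q] by simp
  have nzM: "ff q (j + m) j \<noteq> 0" by (metis FM mult_zero_left qpochq_nz[OF nq])
  have nzN: "ff q (i + n') i \<noteq> 0" by (metis FN mult_zero_left qpochq_nz[OF nq])
  have W: "Wv q (j + m) (i + n') j i = q ^ (i * m) * ff q (j + m) j * ff q (i + n') i" by (simp add: Wv_def)
  have xp: "(x * q ^ i) ^ m = x ^ m * q ^ (i * m)" by (simp add: power_mult_distrib power_mult)
  have P: "phiT q \<alpha> (b * q ^ j) (b' * q ^ i) (c * q ^ j) (c' * q ^ i) (x * q ^ i) y (m, n')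
    = qpoch \<alpha> q (m + n') * qpoch (b * q ^ j) q m * qpoch (b' * q ^ i) q n'
        / (qpoch q q m * qpoch q q n' * qpoch (c * q ^ j) q m * qpoch (c' * q ^ i) q n') * (x ^ m * q ^ (i * m)) * y ^ n'"
    by (simp only: phiT_def prod.case xp)
  have B: "Bx q b b' c c' x y (j + m) (i + n') = (qpoch b q j * qpoch (b * q ^ j) q m) * (qpoch b' q i * qpoch (b' * q ^ i) q n')
     / ((ff q (j + m) j * qpoch q q m) * (ff q (i + n') i * qpoch q q n') * (qpoch c q j * qpoch (c * q ^ j) q m) * (qpoch c' q i * qpoch (c' * q ^ i) q n'))
     * (x ^ j * x ^ m) * (y ^ i * y ^ n')"
    unfolding Bx_def FM[symmetric] FN[symmetric] qpoch_add[symmetric] power_add ..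
  show ?thesis
    unfolding P B W
    by (rule alg[OF nzM nzN])
qed



definition shiftf :: "nat \<Rightarrow> nat \<Rightarrow> (nat \<times> nat \<Rightarrow> complex) \<Rightarrow> nat \<times> nat \<Rightarrow> complex" where
  "shiftf u v g = (\<lambda>(M, N). if u \<le> M \<and> v \<le> N then g (M - u, N - v) else 0)"

lemma has_sum_shift:
  assumes "(g has_sum s) UNIV"
  shows "(shiftf u v g has_sum s) UNIV"
proof -
  define h where "h = (\<lambda>(m::nat, n::nat). (m + u, n + v))"
  have inj: "inj_on h UNIV" unfolding h_def by (auto simp: inj_on_def)
  have comp: "shiftf u v g \<circ> h = g" unfolding h_def shiftf_def by (auto simp: fun_eq_iff)
  have "(shiftf u v g has_sum s) (h ` UNIV)"
    using has_sum_reindex[OF inj, of "shiftf u v g" s] comp assms by simp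
  moreover have "shiftf u v g p = 0" if "p \<in> UNIV - h ` UNIV" for p
  proof -
    obtain M N where p: "p = (M, N)" by fastforce
    have "\<not> (u \<le> M \<and> v \<le> N)"
    proof
      assume "u \<le> M \<and> v \<le> N"
      then have "p = h (M - u, N - v)" unfolding p h_def by auto
      then show False using that by auto
    qed
    then show ?thesis unfolding p shiftf_def by auto
  qed
  ultimately show ?thesis
    by (subst (asm) has_sum_cong_neutral[where T = UNIV and g = "shiftf u v g"]) auto
qed

lemma has_sum_finsum:
  fixes f :: "'i \<Rightarrow> 'a \<Rightarrow> complex"
  assumes "finite I" "\<And>i. i \<in> I \<Longrightarrow> (f i has_sum s i) A"
  shows "((\<lambda>x. \<Sum>i\<in>I. f i x) has_sum (\<Sum>i\<in>I. s i)) A"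
  using assms
proof (induction I rule: finite_induct)
  case empty then show ?case by simp
next
  case (insert j I)
  have fj: "(f j has_sum s j) A" using insert.prems by simp
  have IH: "((\<lambda>x. \<Sum>i\<in>I. f i x) has_sum (\<Sum>i\<in>I. s i)) A" using insert by auto
  show ?case using has_sum_add[OF fj IH] insert.hyps by simp
qed

lemma TL:
  assumes nq: "norm q < 1" and hc: "\<And>m. qpoch c q m \<noteq> 0" and hc': "\<And>m. qpoch c' q m \<noteq> 0"
    and ik: "i \<le> k"
  shows "qbinom q n k * qbinom q k i * (qpoch b q (k - i) * qpoch b' q i) / (qpoch c q (k - i) * qpoch c' q i)
      * g1 * g2 * x ^ (k - i) * y ^ i
      * shiftf (k - i) i (phiT q \<alpha> (b * q ^ (k - i)) (b' * q ^ i) (c * q ^ (k - i)) (c' * q ^ i) (x * q ^ i) y) (M, N)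
    = Bx q b b' c c' x y M N * (qbinom q n k * qbinom q k i * g1 * g2 * Wv q M N (k - i) i * qpoch \<alpha> q (M + N - k))"
proof (cases "k - i \<le> M \<and> i \<le> N")
  case True
  define j where "j = k - i"
  obtain m where m: "M = j + m" using True j_def by (metis le_add_diff_inverse)
  obtain n' where n': "N = i + n'" using True by (metis le_add_diff_inverse)
  have e: "M - j = m" "N - i = n'" "M + N - k = m + n'" using m n' ik j_def by auto
  have sh: "shiftf j i (phiT q \<alpha> (b * q ^ j) (b' * q ^ i) (c * q ^ j) (c' * q ^ i) (x * q ^ i) y) (M, N)
     = phiT q \<alpha> (b * q ^ j) (b' * q ^ i) (c * q ^ j) (c' * q ^ i) (x * q ^ i) y (m, n')"
    unfolding shiftf_def prod.case e(1,2) using True j_def by simp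
  show ?thesis
    unfolding j_def[symmetric] sh e(3)
    using TL0[OF nq hc hc', of "qbinom q n k" "qbinom q k i" b j b' i g1 g2 x y \<alpha> m n']
    unfolding m n' .
next
  case False
  then have "Wv q M N (k - i) i = 0" by (auto simp: Wv_def ff_zero)
  moreover have "shiftf (k - i) i (phiT q \<alpha> (b * q ^ (k - i)) (b' * q ^ i) (c * q ^ (k - i)) (c' * q ^ i) (x * q ^ i) y) (M, N) = 0"
    using False unfolding shiftf_def by auto
  ultimately show ?thesis by simp
qed



lemma pointwise:
  assumes nq: "norm q < 1" and hc: "\<And>m. qpoch c q m \<noteq> 0" and hc': "\<And>m. qpoch c' q m \<noteq> 0"
    and HW: "\<And>L. (\<Sum>k\<le>n. qb q n k * (gA k * gB k) * (ff q L k * qpoch (A k) q (L - k))) = qpoch al q L"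
  shows "(\<Sum>k\<le>n. \<Sum>i\<le>k. qbinom q n k * qbinom q k i * (qpoch b q (k - i) * qpoch b' q i) / (qpoch c q (k - i) * qpoch c' q i)
      * gA k * gB k * x ^ (k - i) * y ^ i
      * shiftf (k - i) i (phiT q (A k) (b * q ^ (k - i)) (b' * q ^ i) (c * q ^ (k - i)) (c' * q ^ i) (x * q ^ i) y) (M, N))
    = phiT q al b b' c c' x y (M, N)"
proof -
  let ?B = "Bx q b b' c c' x y M N"
  have "(\<Sum>k\<le>n. \<Sum>i\<le>k. qbinom q n k * qbinom q k i * (qpoch b q (k - i) * qpoch b' q i) / (qpoch c q (k - i) * qpoch c' q i)
      * gA k * gB k * x ^ (k - i) * y ^ i
      * shiftf (k - i) i (phiT q (A k) (b * q ^ (k - i)) (b' * q ^ i) (c * q ^ (k - i)) (c' * q ^ i) (x * q ^ i) y) (M, N))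
    = (\<Sum>k\<le>n. \<Sum>i\<le>k. ?B * (qbinom q n k * qbinom q k i * gA k * gB k * Wv q M N (k - i) i * qpoch (A k) q (M + N - k)))"
    by (intro sum.cong refl TL[OF nq hc hc']) simp
  also have "\<dots> = (\<Sum>k\<le>n. ?B * (qb q n k * (gA k * gB k) * (ff q (M + N) k * qpoch (A k) q (M + N - k))))"
  proof (rule sum.cong[OF refl])
    fix k assume "k \<in> {..n}"
    then have kn: "k \<le> n" by simp
    have "(\<Sum>i\<le>k. ?B * (qbinom q n k * qbinom q k i * gA k * gB k * Wv q M N (k - i) i * qpoch (A k) q (M + N - k)))
      = (\<Sum>i\<le>k. (?B * qb q n k * gA k * gB k * qpoch (A k) q (M + N - k)) * (qb q k i * Wv q M N (k - i) i))"
    proof (rule sum.cong[OF refl])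
      fix i assume "i \<in> {..k}"
      then have "qbinom q k i = qb q k i" "qbinom q n k = qb q n k" using qb_eq[OF nq] kn by auto
      then show "?B * (qbinom q n k * qbinom q k i * gA k * gB k * Wv q M N (k - i) i * qpoch (A k) q (M + N - k))
         = (?B * qb q n k * gA k * gB k * qpoch (A k) q (M + N - k)) * (qb q k i * Wv q M N (k - i) i)"
        by (simp only: mult_ac)
    qed
    also have "\<dots> = (?B * qb q n k * gA k * gB k * qpoch (A k) q (M + N - k)) * ff q (M + N) k"
      by (simp only: sum_distrib_left[symmetric] vandermonde)
    also have "\<dots> = ?B * (qb q n k * (gA k * gB k) * (ff q (M + N) k * qpoch (A k) q (M + N - k)))"
      by (simp only: mult_ac)
    finally show "(\<Sum>i\<le>k. ?B * (qbinom q n k * qbinom q k i * gA k * gB k * Wv q M N (k - i) i * qpoch (A k) q (M + N - k)))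
       = ?B * (qb q n k * (gA k * gB k) * (ff q (M + N) k * qpoch (A k) q (M + N - k)))" .
  qed
  also have "\<dots> = ?B * qpoch al q (M + N)"
    by (simp only: sum_distrib_left[symmetric] HW)
  also have "\<dots> = phiT q al b b' c c' x y (M, N)" by (simp only: phiT_Bx)
  finally show ?thesis .
qed

lemma main_gen:
  assumes nq: "norm q < 1" and hc: "\<And>m. qpoch c q m \<noteq> 0" and hc': "\<And>m. qpoch c' q m \<noteq> 0"
    and HW: "\<And>L. (\<Sum>k\<le>n. qb q n k * (gA k * gB k) * (ff q L k * qpoch (A k) q (L - k))) = qpoch al q L"
    and S: "\<And>k i. k \<le> n \<Longrightarrow> i \<le> k \<Longrightarrow>
       phiT q (A k) (b * q ^ (k - i)) (b' * q ^ i) (c * q ^ (k - i)) (c' * q ^ i) (x * q ^ i) y summable_on UNIV"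
  shows "Phi2 q al b b' c c' x y =
       (\<Sum>k\<le>n. \<Sum>i\<le>k. qbinom q n k * qbinom q k i
          * (qpoch b q (k - i) * qpoch b' q i) / (qpoch c q (k - i) * qpoch c' q i)
          * gA k * gB k * x ^ (k - i) * y ^ i
          * Phi2 q (A k) (b * q ^ (k - i)) (b' * q ^ i) (c * q ^ (k - i)) (c' * q ^ i)
                 (x * q ^ i) y)"
proof -
  define F where "F k i = phiT q (A k) (b * q ^ (k - i)) (b' * q ^ i) (c * q ^ (k - i)) (c' * q ^ i) (x * q ^ i) y" for k i
  define W where "W k i = qbinom q n k * qbinom q k i
          * (qpoch b q (k - i) * qpoch b' q i) / (qpoch c q (k - i) * qpoch c' q i)
          * gA k * gB k * x ^ (k - i) * y ^ i" for k i
  have hs: "((\<lambda>p. W k i * shiftf (k - i) i (F k i) p) has_sum (W k i * Phi2 q (A k) (b * q ^ (k - i)) (b' * q ^ i) (c * q ^ (k - i)) (c' * q ^ i)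
                 (x * q ^ i) y)) UNIV" if "k \<le> n" "i \<le> k" for k i
  proof -
    have "(F k i has_sum infsum (F k i) UNIV) UNIV" using S[OF that] unfolding F_def by simp
    then have "(F k i has_sum Phi2 q (A k) (b * q ^ (k - i)) (b' * q ^ i) (c * q ^ (k - i)) (c' * q ^ i) (x * q ^ i) y) UNIV"
      unfolding F_def Phi2_phiT .
    then show ?thesis by (intro has_sum_cmult_right has_sum_shift)
  qed
  have "((\<lambda>p. \<Sum>k\<le>n. \<Sum>i\<le>k. W k i * shiftf (k - i) i (F k i) p) has_sum
     (\<Sum>k\<le>n. \<Sum>i\<le>k. W k i * Phi2 q (A k) (b * q ^ (k - i)) (b' * q ^ i) (c * q ^ (k - i)) (c' * q ^ i) (x * q ^ i) y)) UNIV"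
    by (intro has_sum_finsum) (auto intro: hs)
  moreover have "(\<lambda>p. \<Sum>k\<le>n. \<Sum>i\<le>k. W k i * shiftf (k - i) i (F k i) p) = phiT q al b b' c c' x y"
  proof
    fix p :: "nat \<times> nat"
    obtain M N where p: "p = (M, N)" by fastforce
    show "(\<Sum>k\<le>n. \<Sum>i\<le>k. W k i * shiftf (k - i) i (F k i) p) = phiT q al b b' c c' x y p"
      unfolding p W_def F_def by (rule pointwise[OF nq hc hc' HW])
  qed
  ultimately have "(phiT q al b b' c c' x y has_sum
     (\<Sum>k\<le>n. \<Sum>i\<le>k. W k i * Phi2 q (A k) (b * q ^ (k - i)) (b' * q ^ i) (c * q ^ (k - i)) (c' * q ^ i) (x * q ^ i) y)) UNIV"
    by simp
  then show ?thesis unfolding Phi2_phiT W_def[symmetric] by (rule infsumI)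
qed



lemma geo_half: "((\<lambda>n::nat. (1/2::real) ^ n) has_sum 2) UNIV"
proof -
  have "(\<lambda>n::nat. (1/2::real) ^ n) sums (1 / (1 - 1/2))" by (rule geometric_sums) simp
  then have "(\<lambda>n::nat. (1/2::real) ^ n) sums 2" by simp
  then show ?thesis by (rule sums_nonneg_imp_has_sum) simp
qed

lemma geo2: "(\<lambda>p::nat \<times> nat. (1/2::real) ^ fst p * (1/2) ^ snd p) summable_on UNIV"
proof -
  have "(\<lambda>p::nat \<times> nat. (1/2::real) ^ fst p * (1/2) ^ snd p) summable_on Sigma UNIV (\<lambda>_. UNIV)"
  proof (rule summable_on_SigmaI)
    fix m :: nat
    show "((\<lambda>n. (1/2::real) ^ fst (m, n) * (1/2) ^ snd (m, n)) has_sum ((1/2) ^ m * 2)) UNIV"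
      using has_sum_cmult_right[OF geo_half, of "(1/2)^m"] by simp
  next
    show "(\<lambda>m::nat. (1/2::real) ^ m * 2) summable_on UNIV"
      using has_sum_cmult_left[OF geo_half, of 2] unfolding summable_on_def by blast
  qed simp
  then show ?thesis by simp
qed

lemma qpoch_ub: assumes "norm q \<le> 1" shows "norm (qpoch z q m) \<le> (1 + norm z) ^ m"
proof -
  have "norm (qpoch z q m) \<le> (\<Prod>j<m. norm (1 - z * q ^ j))"
    unfolding qpoch_def by (rule norm_prod_le)
  also have "\<dots> \<le> (\<Prod>j<m. 1 + norm z)"
  proof (rule prod_mono)
    fix j
    have "norm (z * q ^ j) \<le> norm z"
      using assms by (simp add: norm_mult norm_power mult_left_le power_le_one)
    then show "0 \<le> norm (1 - z * q ^ j) \<and> norm (1 - z * q ^ j) \<le> 1 + norm z"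
      using norm_triangle_ineq4[of 1 "z * q ^ j"] by simp
  qed
  finally show ?thesis by simp
qed

lemma qpoch_lb:
  assumes nq: "norm q < 1" and nz: "\<And>m. qpoch z q m \<noteq> 0"
  shows "\<exists>\<delta>>0. \<forall>m. \<delta> * (1/2) ^ m \<le> norm (qpoch z q m)"
proof -
  have "(\<lambda>j. norm z * norm q ^ j) \<longlonglongrightarrow> norm z * 0"
    by (intro tendsto_mult tendsto_const LIMSEQ_power_zero) (use nq in simp)
  then have "eventually (\<lambda>j. norm z * norm q ^ j < 1/2) sequentially"
    by (rule order_tendstoD(2)) simp_all
  then obtain J where J: "\<And>j. j \<ge> J \<Longrightarrow> norm z * norm q ^ j < 1/2"
    unfolding eventually_sequentially by blast
  define \<delta> where "\<delta> = Min ((\<lambda>m. norm (qpoch z q m)) ` {..J})"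
  have dpos: "\<delta> > 0" unfolding \<delta>_def using nz by (subst Min_gr_iff) auto
  have dle: "\<delta> \<le> norm (qpoch z q m)" if "m \<le> J" for m
    unfolding \<delta>_def using that by (intro Min_le) auto
  have "\<delta> * (1/2) ^ m \<le> norm (qpoch z q m)" for m
  proof (induction m)
    case 0 then show ?case using dle[of 0] by simp
  next
    case (Suc m)
    show ?case
    proof (cases "Suc m \<le> J")
      case True
      have p: "(1/2::real) ^ Suc m \<le> 1" by (rule power_le_one) auto
      have "\<delta> * (1/2) ^ Suc m \<le> \<delta> * 1" using dpos p by (intro mult_left_mono) auto
      then show ?thesis using dle[OF True] by linarith
    next
      case False
      then have "m \<ge> J" by simp
      then have h: "norm z * norm q ^ m < 1/2" by (rule J)
      have "1/2 \<le> norm (1 - z * q ^ m)"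
        using norm_triangle_ineq2[of 1 "z * q ^ m"] h by (simp add: norm_mult norm_power)
      have "\<delta> * (1/2) ^ Suc m = (\<delta> * (1/2) ^ m) * (1/2)" by simp
      also have "\<dots> \<le> norm (qpoch z q m) * norm (1 - z * q ^ m)"
        by (rule mult_mono) (use Suc.IH \<open>1/2 \<le> norm (1 - z * q ^ m)\<close> in auto)
      also have "\<dots> = norm (qpoch z q (Suc m))" by (simp add: qpoch_Suc norm_mult)
      finally show ?thesis .
    qed
  qed
  then show ?thesis using dpos by blast
qed



lemma alg2: fixes dq dc dc' A Bb Bb' X Y :: real and m n :: nat
  assumes "dq > 0" "dc > 0" "dc' > 0"
  shows "A ^ (m + n) * Bb ^ m * Bb' ^ n / ((dq * (1/2) ^ m) * (dq * (1/2) ^ n) * (dc * (1/2) ^ m) * (dc' * (1/2) ^ n)) * X ^ m * Y ^ n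
    = 1 / (dq * dq * dc * dc') * ((4 * A * Bb * X) ^ m * (4 * A * Bb' * Y) ^ n)"
proof -
  have h: "(1/2::real) ^ m * (1/2) ^ m * 4 ^ m = 1" "(1/2::real) ^ n * (1/2) ^ n * 4 ^ n = 1"
    by (simp_all flip: power_mult_distrib)
  have "A ^ (m + n) * Bb ^ m * Bb' ^ n / ((dq * (1/2) ^ m) * (dq * (1/2) ^ n) * (dc * (1/2) ^ m) * (dc' * (1/2) ^ n)) * X ^ m * Y ^ n
     = A ^ (m + n) * Bb ^ m * Bb' ^ n * X ^ m * Y ^ n / (dq * dq * dc * dc') / (((1/2) ^ m * (1/2) ^ m) * ((1/2) ^ n * (1/2) ^ n))"
    by (simp add: mult_ac)
  also have "\<dots> = A ^ (m + n) * Bb ^ m * Bb' ^ n * X ^ m * Y ^ n / (dq * dq * dc * dc') * (4 ^ m * 4 ^ n)"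
    using h by (simp add: field_simps)
  also have "\<dots> = 1 / (dq * dq * dc * dc') * ((4 * A * Bb * X) ^ m * (4 * A * Bb' * Y) ^ n)"
    by (simp add: power_mult_distrib power_add mult_ac)
  finally show ?thesis .
qed

lemma phiT_summable:
  assumes nq: "norm q < 1" and hc: "\<And>m. qpoch c q m \<noteq> 0" and hc': "\<And>m. qpoch c' q m \<noteq> 0"
  shows "\<exists>r>0. \<forall>x y. norm x < r \<and> norm y < r \<longrightarrow> phiT q a b b' c c' x y summable_on UNIV"
proof -
  obtain dq where dq: "dq > 0" "\<And>m. dq * (1/2) ^ m \<le> norm (qpoch q q m)"
    using qpoch_lb[OF nq qpochq_nz[OF nq]] by blast
  obtain dc where dc: "dc > 0" "\<And>m. dc * (1/2) ^ m \<le> norm (qpoch c q m)"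
    using qpoch_lb[OF nq hc] by blast
  obtain dc' where dc': "dc' > 0" "\<And>m. dc' * (1/2) ^ m \<le> norm (qpoch c' q m)"
    using qpoch_lb[OF nq hc'] by blast
  define A where "A = 1 + norm a"
  define Bb where "Bb = 1 + norm b"
  define Bb' where "Bb' = 1 + norm b'"
  have A1: "A \<ge> 1" "Bb \<ge> 1" "Bb' \<ge> 1" unfolding A_def Bb_def Bb'_def by auto
  define r where "r = 1 / (8 * A * Bb * Bb')"
  have rpos: "r > 0" unfolding r_def using A1 by simp
  have nq1: "norm q \<le> 1" using nq by simp
  define K where "K = 1 / (dq * dq * dc * dc')"
  have "phiT q a b b' c c' x y summable_on UNIV" if xy: "norm x < r" "norm y < r" for x y
  proof -
    define u where "u = 4 * A * Bb * norm x"
    define v where "v = 4 * A * Bb' * norm y"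
    have u: "0 \<le> u" "u \<le> 1/2"
    proof -
      show "0 \<le> u" unfolding u_def using A1 by simp
      have "4 * A * Bb * norm x \<le> 4 * A * Bb * r" using xy A1 by (intro mult_left_mono) auto
      also have "\<dots> = 1 / (2 * Bb')" unfolding r_def using A1 by (simp add: field_simps)
      also have "\<dots> \<le> 1/2" using A1 by (simp add: field_simps)
      finally show "u \<le> 1/2" unfolding u_def .
    qed
    have v: "0 \<le> v" "v \<le> 1/2"
    proof -
      show "0 \<le> v" unfolding v_def using A1 by simp
      have "4 * A * Bb' * norm y \<le> 4 * A * Bb' * r" using xy A1 by (intro mult_left_mono) auto
      also have "\<dots> = 1 / (2 * Bb)" unfolding r_def using A1 by (simp add: field_simps)
      also have "\<dots> \<le> 1/2" using A1 by (simp add: field_simps)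
      finally show "v \<le> 1/2" unfolding v_def .
    qed
    have bound: "norm (phiT q a b b' c c' x y p) \<le> K * ((1/2) ^ fst p * (1/2) ^ snd p)" for p
    proof -
      obtain m n where p: "p = (m, n)" by fastforce
      define N where "N = norm (qpoch a q (m + n)) * norm (qpoch b q m) * norm (qpoch b' q n)"
      define D where "D = norm (qpoch q q m) * norm (qpoch q q n) * norm (qpoch c q m) * norm (qpoch c' q n)"
      define N0 where "N0 = A ^ (m + n) * Bb ^ m * Bb' ^ n"
      define D0 where "D0 = (dq * (1/2) ^ m) * (dq * (1/2) ^ n) * (dc * (1/2) ^ m) * (dc' * (1/2) ^ n)"
      have e: "norm (phiT q a b b' c c' x y p) = N / D * norm x ^ m * norm y ^ n"
        unfolding p phiT_def N_def D_def by (simp add: norm_mult norm_divide norm_power)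
      have NN: "N \<le> N0" unfolding N_def N0_def A_def Bb_def Bb'_def
        by (intro mult_mono qpoch_ub[OF nq1]) (auto intro: mult_nonneg_nonneg)
      have D0pos: "0 < D0" unfolding D0_def using dq dc dc' by simp
      have DD: "D0 \<le> D" unfolding D0_def D_def
        by (intro mult_mono dq dc dc') (use dq(1) dc(1) dc'(1) in \<open>auto intro: mult_nonneg_nonneg\<close>)
      have "N / D \<le> N0 / D0"
        by (rule frac_le) (use NN D0pos DD in \<open>auto simp: N_def N0_def A_def Bb_def Bb'_def\<close>)
      then have "N / D * norm x ^ m * norm y ^ n \<le> N0 / D0 * norm x ^ m * norm y ^ n"
        by (intro mult_right_mono) auto
      also have "\<dots> = K * (u ^ m * v ^ n)"
        unfolding N0_def D0_def K_def u_def v_def by (rule alg2) (use dq dc dc' in auto)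
      also have "\<dots> \<le> K * ((1/2) ^ m * (1/2) ^ n)"
        unfolding K_def using u v dq dc dc'
        by (intro mult_left_mono mult_mono power_mono) auto
      finally show ?thesis using e p by simp
    qed
    have "(\<lambda>p. norm (phiT q a b b' c c' x y p)) summable_on UNIV"
      by (rule Infinite_Sum.abs_summable_on_comparison_test'[OF summable_on_cmult_right[OF geo2]]) (rule bound)
    then show ?thesis by (simp add: summable_on_iff_abs_summable_on_complex)
  qed
  then show ?thesis using rpos by blast
qed



lemma ev_of:
  assumes "\<exists>r>0. \<forall>x y. norm x < r \<and> norm y < r \<longrightarrow> P x y"
  shows "eventually (\<lambda>r. \<forall>x y. norm x < r \<and> norm y < (r::real) \<longrightarrow> P x y) (at_right 0)"
proof -
  obtain r0 where r0: "r0 > 0" "\<forall>x y. norm x < r0 \<and> norm y < r0 \<longrightarrow> P x y" using assms by blast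
  show ?thesis unfolding eventually_at_right_field
    by (rule exI[of _ r0]) (use r0 in auto)
qed

lemma inst_summable:
  assumes nq: "norm q < 1" and hc: "\<And>m. qpoch c q m \<noteq> 0" and hc': "\<And>m. qpoch c' q m \<noteq> 0"
  shows "\<exists>r>0. \<forall>x y. norm x < r \<and> norm y < r \<longrightarrow>
     phiT q \<alpha> (b * q ^ j) (b' * q ^ i) (c * q ^ j) (c' * q ^ i) (x * q ^ i) y summable_on UNIV"
proof -
  obtain r where r: "r > 0" "\<forall>x y. norm x < r \<and> norm y < r \<longrightarrow>
     phiT q \<alpha> (b * q ^ j) (b' * q ^ i) (c * q ^ j) (c' * q ^ i) x y summable_on UNIV"
    using phiT_summable[OF nq qpoch_shift_nz[OF hc] qpoch_shift_nz[OF hc']] by blast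
  have "norm (x * q ^ i) \<le> norm x" for x
    using nq by (simp add: norm_mult norm_power mult_left_le power_le_one)
  then show ?thesis using r by (meson le_less_trans)
qed

theorem theorem7:
  fixes q a b b' c c' :: complex and n :: nat
  assumes "0 < norm q" and "norm q < 1"
    and "\<And>m. qpoch c q m \<noteq> 0" and "\<And>m. qpoch c' q m \<noteq> 0"
  shows "\<exists>r>0. \<forall>x y. norm x < r \<and> norm y < r \<longrightarrow>
     Phi2 q (a * q ^ n) b b' c c' x y =
       (\<Sum>k\<le>n. \<Sum>i\<le>k. qbinom q n k * qbinom q k i
          * (qpoch b q (k - i) * qpoch b' q i) / (qpoch c q (k - i) * qpoch c' q i)
          * q ^ (2 * (k choose 2)) * a ^ k * x ^ (k - i) * y ^ i
          * Phi2 q (a * q ^ k) (b * q ^ (k - i)) (b' * q ^ i) (c * q ^ (k - i)) (c' * q ^ i)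
                 (x * q ^ i) y)
     \<and> Phi2 q (a / q ^ n) b b' c c' x y =
       (\<Sum>k\<le>n. \<Sum>i\<le>k. qbinom q n k * qbinom q k i
          * (qpoch b q (k - i) * qpoch b' q i) / (qpoch c q (k - i) * qpoch c' q i)
          * q powi (int (k choose 2) - int n * int k) * (- a) ^ k * x ^ (k - i) * y ^ i
          * Phi2 q a (b * q ^ (k - i)) (b' * q ^ i) (c * q ^ (k - i)) (c' * q ^ i)
                 (x * q ^ i) y)"
proof -
  note nq = assms(2) and hc = assms(3) and hc' = assms(4)
  have q0: "q \<noteq> 0" using assms(1) by auto
  define I where "I = Sigma {..n} (\<lambda>k. {..k})"
  have fI: "finite I" unfolding I_def by simp
  define P where "P = (\<lambda>ki r. \<forall>x y. norm x < r \<and> norm y < (r::real) \<longrightarrow>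
      phiT q (a * q ^ fst ki) (b * q ^ (fst ki - snd ki)) (b' * q ^ snd ki) (c * q ^ (fst ki - snd ki)) (c' * q ^ snd ki) (x * q ^ snd ki) y summable_on UNIV
    \<and> phiT q a (b * q ^ (fst ki - snd ki)) (b' * q ^ snd ki) (c * q ^ (fst ki - snd ki)) (c' * q ^ snd ki) (x * q ^ snd ki) y summable_on UNIV)"
  have "\<forall>ki\<in>I. eventually (P ki) (at_right 0)"
  proof
    fix ki assume "ki \<in> I"
    have e1: "eventually (\<lambda>r. \<forall>x y. norm x < r \<and> norm y < (r::real) \<longrightarrow>
      phiT q (a * q ^ fst ki) (b * q ^ (fst ki - snd ki)) (b' * q ^ snd ki) (c * q ^ (fst ki - snd ki)) (c' * q ^ snd ki) (x * q ^ snd ki) y summable_on UNIV) (at_right 0)"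
      by (rule ev_of[OF inst_summable[OF nq hc hc']])
    have e2: "eventually (\<lambda>r. \<forall>x y. norm x < r \<and> norm y < (r::real) \<longrightarrow>
      phiT q a (b * q ^ (fst ki - snd ki)) (b' * q ^ snd ki) (c * q ^ (fst ki - snd ki)) (c' * q ^ snd ki) (x * q ^ snd ki) y summable_on UNIV) (at_right 0)"
      by (rule ev_of[OF inst_summable[OF nq hc hc']])
    show "eventually (P ki) (at_right 0)"
      using eventually_conj[OF e1 e2] unfolding P_def by (rule eventually_mono) blast
  qed
  then have "eventually (\<lambda>r. \<forall>ki\<in>I. P ki r) (at_right 0)"
    by (rule eventually_ball_finite[OF fI])
  then obtain r0 where r0: "r0 > 0" "\<And>r. r > 0 \<Longrightarrow> r < r0 \<Longrightarrow> \<forall>ki\<in>I. P ki r"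
    unfolding eventually_at_right_field by auto
  define r where "r = r0 / 2"
  have rpos: "r > 0" and rP: "\<forall>ki\<in>I. P ki r" using r0 unfolding r_def by auto
  have "\<forall>x y. norm x < r \<and> norm y < r \<longrightarrow> (Phi2 q (a * q ^ n) b b' c c' x y =
       (\<Sum>k\<le>n. \<Sum>i\<le>k. qbinom q n k * qbinom q k i
          * (qpoch b q (k - i) * qpoch b' q i) / (qpoch c q (k - i) * qpoch c' q i)
          * q ^ (2 * (k choose 2)) * a ^ k * x ^ (k - i) * y ^ i
          * Phi2 q (a * q ^ k) (b * q ^ (k - i)) (b' * q ^ i) (c * q ^ (k - i)) (c' * q ^ i)
                 (x * q ^ i) y)
     \<and> Phi2 q (a / q ^ n) b b' c c' x y =
       (\<Sum>k\<le>n. \<Sum>i\<le>k. qbinom q n k * qbinom q k i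
          * (qpoch b q (k - i) * qpoch b' q i) / (qpoch c q (k - i) * qpoch c' q i)
          * q powi (int (k choose 2) - int n * int k) * (- a) ^ k * x ^ (k - i) * y ^ i
          * Phi2 q a (b * q ^ (k - i)) (b' * q ^ i) (c * q ^ (k - i)) (c' * q ^ i)
                 (x * q ^ i) y))"
  proof (intro allI impI conjI)
    fix x y :: complex assume xy: "norm x < r \<and> norm y < r"
    have S: "phiT q (a * q ^ k) (b * q ^ (k - i)) (b' * q ^ i) (c * q ^ (k - i)) (c' * q ^ i) (x * q ^ i) y summable_on UNIV
       \<and> phiT q a (b * q ^ (k - i)) (b' * q ^ i) (c * q ^ (k - i)) (c' * q ^ i) (x * q ^ i) y summable_on UNIV"
      if "k \<le> n" "i \<le> k" for k i
    proof -
      have "(k, i) \<in> I" unfolding I_def using that by auto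
      then show ?thesis using rP xy unfolding P_def by fastforce
    qed
    show "Phi2 q (a * q ^ n) b b' c c' x y =
       (\<Sum>k\<le>n. \<Sum>i\<le>k. qbinom q n k * qbinom q k i
          * (qpoch b q (k - i) * qpoch b' q i) / (qpoch c q (k - i) * qpoch c' q i)
          * q ^ (2 * (k choose 2)) * a ^ k * x ^ (k - i) * y ^ i
          * Phi2 q (a * q ^ k) (b * q ^ (k - i)) (b' * q ^ i) (c * q ^ (k - i)) (c' * q ^ i)
                 (x * q ^ i) y)"
      by (rule main_gen[OF nq hc hc', where gA = "\<lambda>k. q ^ (2 * (k choose 2))" and gB = "\<lambda>k. a ^ k"
            and A = "\<lambda>k. a * q ^ k" and al = "a * q ^ n"])
         (use W_final S in auto)
    show "Phi2 q (a / q ^ n) b b' c c' x y =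
       (\<Sum>k\<le>n. \<Sum>i\<le>k. qbinom q n k * qbinom q k i
          * (qpoch b q (k - i) * qpoch b' q i) / (qpoch c q (k - i) * qpoch c' q i)
          * q powi (int (k choose 2) - int n * int k) * (- a) ^ k * x ^ (k - i) * y ^ i
          * Phi2 q a (b * q ^ (k - i)) (b' * q ^ i) (c * q ^ (k - i)) (c' * q ^ i)
                 (x * q ^ i) y)"
      by (rule main_gen[OF nq hc hc', where gA = "\<lambda>k. q powi (int (k choose 2) - int n * int k)" and gB = "\<lambda>k. (- a) ^ k"
            and A = "\<lambda>k. a" and al = "a / q ^ n"])
         (use G_final[OF q0] S in auto)
  qed
  then show ?thesis using rpos by blast
qed

end
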